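(* Suppose $\underline\nu^*(A^* )=\{\underline\nu^0\}$ is a singleton for some $A^*\in\mathbf S^k_{++}$, and $A^{(N)}\in\mathbf S^k_{++}$ with $A^{(N)}\to A^*$. Then for every $\varepsilon>0$ there is $N_1$ such that $\|\underline n/t-\underline\nu^0\|<\varepsilon$ whenever $\underline n\in\underline n^*_t(A^{(N)})$ and $N,t\ge N_1$.
   Context: $\mathbf S^k_{++}$ is the set of $k\times k$ symmetric positive-definite matrices. $\mathcal I$ is a collection of nonempty subsets of $\{1,\dots,k\}$, $a\in\mathbb{R}^k\setminus\{0\}$ with $\operatorname{supp}(a)\subseteq\bigcup\mathcal I$. $P_I:\mathbb{R}^k\to\mathbb{R}^{|I|}$ is the coordinate projection onto $I$, and for $A\in\mathbf S^k_{++}$, $A_I^\dagger:=(P_I^\top P_IAP_I^\top P_I)^\dagger=P_I^\top(P_IAP_I^\top)^{-1}P_I$. Costs $c_I\in\mathbb{R}^m_{\ge0}$, each with at least one positive coordinate, and $B_0\in\mathbb{R}^m_{>0}$; vector inequalities componentwise. $K=\{\underline\nu\in\mathbb{R}^{\mathcal I}:\underline\nu\ge0,\ \sum_I\nu_Ic_I\le B_0\}$. $F(\underline\nu,A)=a^\top(\sum_I\nu_IA_I^\dagger)^\dagger a$ if $a\in\operatorname{range}(\sum_I\nu_IA_I^\dagger)$ and $F(\underline\nu,A)=\infty$ otherwise. $\underline\nu^*(A)=\operatorname{argmin}_{\underline\nu\in K}F(\underline\nu,A)$ (a set). For $t>0$, $\underline n^*_t(A)$ is the set of minimizers of $a^\top(\sum_In_IA_I^\dagger)^\dagger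 a$ over $\underline n\in\mathbb{Z}^{\mathcal I}_{\ge0}$ with $\sum_In_Ic_I\le tB_0$ and $\operatorname{supp}(a)\subseteq\bigcup\{I:n_I>0\}$. *)

theory Defs
  imports "HOL-Analysis.Analysis"
begin

definition pinv :: "real^'k^'k \<Rightarrow> real^'k^'k" where
  "pinv M = (THE X. M ** X ** M = M \<and> X ** M ** X = X \<and>
                    transpose (M ** X) = M ** X \<and> transpose (X ** M) = X ** M)"

definition sym_pd :: "real^'k^'k \<Rightarrow> bool" where
  "sym_pd A \<longleftrightarrow> transpose A = A \<and> (\<forall>x. x \<noteq> 0 \<longrightarrow> x \<bullet> (A *v x) > 0)"

text \<open>P_I^T P_I A P_I^T P_I : keep the I x I block, zero elsewhere.\<close>
definition maskI :: "'k set \<Rightarrow> real^'k^'k \<Rightarrow> real^'k^'k" where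
  "maskI I A = (\<chi> i j. if i \<in> I \<and> j \<in> I then A $ i $ j else 0)"

definition Adag :: "'k set \<Rightarrow> real^'k^'k \<Rightarrow> real^'k^'k" where
  "Adag I A = pinv (maskI I A)"

definition infoM :: "'k set set \<Rightarrow> ('k set \<Rightarrow> real) \<Rightarrow> real^'k^'k \<Rightarrow> real^'k^'k" where
  "infoM \<I> \<nu> A = (\<Sum>I\<in>\<I>. \<nu> I *\<^sub>R Adag I A)"

definition Fobj :: "'k set set \<Rightarrow> real^'k \<Rightarrow> ('k set \<Rightarrow> real) \<Rightarrow> real^'k^'k \<Rightarrow> ereal" where
  "Fobj \<I> a \<nu> A = (if a \<in> range (\<lambda>x. infoM \<I> \<nu> A *v x)
                    then ereal (a \<bullet> (pinv (infoM \<I> \<nu> A) *v a)) else \<infinity>)"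

text \<open>Elements of R^\<I> are functions vanishing outside \<I>.\<close>
definition Kset :: "'k set set \<Rightarrow> ('k set \<Rightarrow> real^'m) \<Rightarrow> real^'m \<Rightarrow> ('k set \<Rightarrow> real) set" where
  "Kset \<I> c B0 = {\<nu>. (\<forall>I. I \<notin> \<I> \<longrightarrow> \<nu> I = 0) \<and> (\<forall>I\<in>\<I>. \<nu> I \<ge> 0) \<and>
                     (\<forall>j. (\<Sum>I\<in>\<I>. \<nu> I * c I $ j) \<le> B0 $ j)}"

definition nu_star :: "'k set set \<Rightarrow> real^'k \<Rightarrow> ('k set \<Rightarrow> real^'m) \<Rightarrow> real^'m \<Rightarrow> real^'k^'k
                        \<Rightarrow> ('k set \<Rightarrow> real) set" where
  "nu_star \<I> a c B0 A = {\<nu> \<in> Kset \<I> c B0. \<forall>\<mu> \<in> Kset \<I> c B0. Fobj \<I> a \<nu> A \<le> Fobj \<I> a \<mu> A}"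

definition Nfeas :: "'k set set \<Rightarrow> real^'k \<Rightarrow> ('k set \<Rightarrow> real^'m) \<Rightarrow> real^'m \<Rightarrow> real
                      \<Rightarrow> ('k set \<Rightarrow> nat) set" where
  "Nfeas \<I> a c B0 t = {n. (\<forall>I. I \<notin> \<I> \<longrightarrow> n I = 0) \<and>
                     (\<forall>j. (\<Sum>I\<in>\<I>. real (n I) * c I $ j) \<le> t * B0 $ j) \<and>
                     {i. a $ i \<noteq> 0} \<subseteq> \<Union>{I\<in>\<I>. n I > 0}}"

definition n_star :: "'k set set \<Rightarrow> real^'k \<Rightarrow> ('k set \<Rightarrow> real^'m) \<Rightarrow> real^'m \<Rightarrow> real
                       \<Rightarrow> real^'k^'k \<Rightarrow> ('k set \<Rightarrow> nat) set" where
  "n_star \<I> a c B0 t A = {n \<in> Nfeas \<I> a c B0 t. \<forall>m \<in> Nfeas \<I> a c B0 t.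
       a \<bullet> (pinv (infoM \<I> (\<lambda>I. real (n I)) A) *v a) \<le> a \<bullet> (pinv (infoM \<I> (\<lambda>I. real (m I)) A) *v a)}"

end

theory Submission
  imports Defs "HOL-Analysis.Analysis"
begin


definition pen :: "real^'k^'k \<Rightarrow> real^'k^'k \<Rightarrow> bool" where
  "pen M X \<longleftrightarrow> M ** X ** M = M \<and> X ** M ** X = X \<and>
                    transpose (M ** X) = M ** X \<and> transpose (X ** M) = X ** M"

lemma pen_unique:
  assumes "pen M X" "pen M Y" shows "X = Y"
proof -
  have X1: "M ** X ** M = M" and X2: "X ** M ** X = X" and X3: "transpose (M ** X) = M ** X"
    and X4: "transpose (X ** M) = X ** M" using assms(1) by (auto simp: pen_def)
  have Y1: "M ** Y ** M = M" and Y2: "Y ** M ** Y = Y" and Y3: "transpose (M ** Y) = M ** Y"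
    and Y4: "transpose (Y ** M) = Y ** M" using assms(2) by (auto simp: pen_def)
  have "X = X ** (M ** X)" using X2 by (simp add: matrix_mul_assoc)
  also have "\<dots> = X ** (transpose X ** transpose M)" using X3 by (metis matrix_transpose_mul)
  also have "transpose M = transpose M ** transpose Y ** transpose M"
    using Y1 by (metis matrix_transpose_mul matrix_mul_assoc)
  also have "X ** (transpose X ** (transpose M ** transpose Y ** transpose M))
       = X ** (transpose (M ** X)) ** (transpose (M ** Y))"
    by (simp add: matrix_transpose_mul matrix_mul_assoc)
  also have "\<dots> = X ** M ** X ** (M ** Y)" using X3 Y3 by (simp add: matrix_mul_assoc)
  also have "\<dots> = X ** M ** Y" using X2 by (simp add: matrix_mul_assoc)
  finally have eX: "X = X ** M ** Y" .
  have "Y = (Y ** M) ** Y" using Y2 by (simp add: matrix_mul_assoc)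
  also have "\<dots> = transpose M ** transpose Y ** Y" using Y4 by (metis matrix_transpose_mul)
  also have "transpose M = transpose M ** transpose X ** transpose M"
    using X1 by (metis matrix_transpose_mul matrix_mul_assoc)
  also have "transpose M ** transpose X ** transpose M ** transpose Y ** Y
       = transpose (X ** M) ** transpose (Y ** M) ** Y"
    by (simp add: matrix_transpose_mul matrix_mul_assoc)
  also have "\<dots> = X ** M ** (Y ** M ** Y)" using X4 Y4 by (simp add: matrix_mul_assoc)
  also have "\<dots> = X ** M ** Y" using Y2 by simp
  finally show ?thesis using eX by simp
qed

lemma pinv_eq: "pen M X \<Longrightarrow> pinv M = X"
  unfolding pinv_def
  by (rule the1_equality) (auto simp: pen_def[symmetric] intro: pen_unique)



lemma mm_entry: "(A ** B) $ i $ j = (\<Sum>k\<in>UNIV. A $ i $ k * B $ k $ j)"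
  by (simp add: matrix_matrix_mult_def)

lemma mm_diff_r: "(A - B) ** (C::real^'k^'k) = A ** C - B ** C"
  by (simp add: vec_eq_iff mm_entry algebra_simps sum_subtractf)
lemma mm_diff_l: "(C::real^'k^'k) ** (A - B) = C ** A - C ** B"
  by (simp add: vec_eq_iff mm_entry algebra_simps sum_subtractf)
lemma mm_add_r: "(A + B) ** (C::real^'k^'k) = A ** C + B ** C"
  by (simp add: vec_eq_iff mm_entry algebra_simps sum.distrib)
lemma transpose_diff: "transpose (A - B) = transpose A - (transpose B :: real^'k^'k)"
  by (simp add: vec_eq_iff transpose_def)
lemma transpose_add: "transpose (A + B) = transpose A + (transpose B :: real^'k^'k)"
  by (simp add: vec_eq_iff transpose_def)

lemma ifm1: "(if P then a else 0) * (c::real) = (if P then a * c else 0)" by simp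
lemma ifm2: "(c::real) * (if P then a else 0) = (if P then c * a else 0)" by simp

definition dg :: "('k::finite \<Rightarrow> real) \<Rightarrow> real^'k^'k" where
  "dg f = (\<chi> i j. if i = j then f i else 0)"

lemma mm_dg_r: "(M ** dg f) $ i $ j = M $ i $ j * f j"
  by (simp add: mm_entry dg_def ifm1 ifm2)
lemma mm_dg_l: "(dg f ** M) $ i $ j = f i * M $ i $ j"
  by (simp add: mm_entry dg_def ifm1 ifm2)
lemma mv_dg: "(dg f *v x) $ i = f i * x $ i"
  by (simp add: matrix_vector_mult_def dg_def ifm1 ifm2)
lemma transpose_dg: "transpose (dg f) = dg f"
  by (simp add: vec_eq_iff transpose_def dg_def)
lemma mat1_dg: "mat 1 = dg (\<lambda>i. 1)"
  by (simp add: vec_eq_iff mat_def dg_def)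

definition Dm :: "'k::finite set \<Rightarrow> real^'k^'k" where "Dm J = dg (\<lambda>i. if i \<in> J then 1 else 0)"
definition Em :: "'k::finite set \<Rightarrow> real^'k^'k" where "Em J = dg (\<lambda>i. if i \<in> J then 0 else 1)"

lemma Dm_Em: "Dm J + Em J = mat 1"
  by (simp add: vec_eq_iff Dm_def Em_def dg_def mat_def)
lemma Em_Em: "Em J ** Em J = Em J"
  by (simp add: vec_eq_iff Em_def mm_dg_r, simp add: dg_def)

definition zout :: "'k::finite set \<Rightarrow> real^'k^'k \<Rightarrow> bool" where
  "zout J M \<longleftrightarrow> (\<forall>i j. i \<notin> J \<or> j \<notin> J \<longrightarrow> M $ i $ j = 0)"

definition struct :: "'k::finite set \<Rightarrow> real^'k^'k \<Rightarrow> bool" where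
  "struct J M \<longleftrightarrow> transpose M = M \<and> zout J M \<and>
     (\<forall>x. x \<noteq> 0 \<and> (\<forall>i. i \<notin> J \<longrightarrow> x $ i = 0) \<longrightarrow> 0 < x \<bullet> (M *v x))"

lemma zout_Em: "zout J M \<Longrightarrow> M ** Em J = 0" "zout J M \<Longrightarrow> Em J ** M = 0"
  by (auto simp: vec_eq_iff Em_def mm_dg_r mm_dg_l zout_def)
lemma zout_Dm: "zout J M \<Longrightarrow> M ** Dm J = M" "zout J M \<Longrightarrow> Dm J ** M = M"
  by (auto simp: vec_eq_iff Dm_def mm_dg_r mm_dg_l zout_def)
lemma zout_iff_Dm: "zout J M \<longleftrightarrow> Dm J ** M ** Dm J = M"
proof
  assume "zout J M" then show "Dm J ** M ** Dm J = M" by (simp add: zout_Dm)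
next
  assume a: "Dm J ** M ** Dm J = M"
  show "zout J M" unfolding zout_def
  proof (intro allI impI)
    fix i j assume "i \<notin> J \<or> j \<notin> J"
    moreover have "M $ i $ j = (Dm J ** M ** Dm J) $ i $ j" using a by simp
    ultimately show "M $ i $ j = 0" by (auto simp: Dm_def mm_dg_r mm_dg_l)
  qed
qed

lemma mv_entry: "(M *v x) $ i = (\<Sum>j\<in>UNIV. M $ i $ j * x $ j)"
  by (simp add: matrix_vector_mult_def)

lemma zout_mv: "zout J M \<Longrightarrow> i \<notin> J \<Longrightarrow> (M *v x) $ i = 0"
  by (simp add: mv_entry zout_def)

lemma dot_transpose: "x \<bullet> ((M::real^'n^'m) *v y) = (transpose M *v x) \<bullet> y"
  by (simp only: transpose_matrix_vector dot_lmul_matrix)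

lemma dot_sym: "transpose (M::real^'n^'n) = M \<Longrightarrow> x \<bullet> (M *v y) = y \<bullet> (M *v x)"
proof -
  assume a: "transpose M = M"
  have "x \<bullet> (M *v y) = (transpose M *v x) \<bullet> y" by (rule dot_transpose)
  also have "\<dots> = (M *v x) \<bullet> y" using a by simp
  finally show ?thesis by (simp add: inner_commute)
qed

lemma struct_psd:
  assumes "struct J M" shows "0 \<le> x \<bullet> (M *v x)"
proof -
  let ?y = "Dm J *v x"
  have z: "zout J M" using assms by (simp add: struct_def)
  have "x \<bullet> (M *v x) = x \<bullet> ((Dm J ** M ** Dm J) *v x)" using z zout_iff_Dm by metis
  also have "\<dots> = ?y \<bullet> (M *v ?y)"
    by (simp add: dot_transpose[of x] matrix_vector_mul_assoc[symmetric] Dm_def transpose_dg)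
  finally have e: "x \<bullet> (M *v x) = ?y \<bullet> (M *v ?y)" .
  show ?thesis
  proof (cases "?y = 0")
    case True then show ?thesis using e by simp
  next
    case False
    have "\<forall>i. i \<notin> J \<longrightarrow> ?y $ i = 0" by (simp add: Dm_def mv_dg)
    then show ?thesis using e False assms by (auto simp: struct_def intro: less_imp_le)
  qed
qed



lemma Dm_eq: "Dm J = mat 1 - Em J" using Dm_Em[of J] by (simp add: algebra_simps)

lemma Em_mv: "(Em J *v x) $ i = (if i \<in> J then 0 else x $ i)"
  by (simp add: Em_def mv_dg)
lemma Dm_mv: "(Dm J *v x) $ i = (if i \<in> J then x $ i else 0)"
  by (simp add: Dm_def mv_dg)

lemma struct_inv:
  assumes "struct J M" shows "invertible (M + Em J)"
proof -
  have z: "zout J M" and sy: "transpose M = M" and pd: "\<And>x. x \<noteq> 0 \<Longrightarrow> (\<forall>i. i \<notin> J \<longrightarrow> x $ i = 0) \<Longrightarrow> 0 < x \<bullet> (M *v x)"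
    using assms by (auto simp: struct_def)
  have "\<forall>x. (M + Em J) *v x = 0 \<longrightarrow> x = 0"
  proof (intro allI impI)
    fix x assume a: "(M + Em J) *v x = 0"
    have xo: "\<forall>i. i \<notin> J \<longrightarrow> x $ i = 0"
    proof (intro allI impI)
      fix i assume i: "i \<notin> J"
      have "((M + Em J) *v x) $ i = 0" using a by simp
      then show "x $ i = 0" using i zout_mv[OF z i, of x] by (simp add: matrix_vector_mult_add_rdistrib Em_mv)
    qed
    have "Em J *v x = 0" using xo by (simp add: vec_eq_iff Em_mv)
    then have "M *v x = 0" using a by (simp add: matrix_vector_mult_add_rdistrib)
    then show "x = 0" using pd[of x] xo by fastforce
  qed
  then show ?thesis
    using matrix_left_invertible_ker invertible_left_inverse by blast
qed

lemma struct_pinv: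
  assumes "struct J M"
  obtains H where "H ** (M + Em J) = mat 1" "(M + Em J) ** H = mat 1" "pinv M = H - Em J"
    "M ** pinv M = Dm J" "pinv M ** M = Dm J" "struct J (pinv M)"
proof -
  have z: "zout J M" and sy: "transpose M = M" and pd: "\<And>x. x \<noteq> 0 \<Longrightarrow> (\<forall>i. i \<notin> J \<longrightarrow> x $ i = 0) \<Longrightarrow> 0 < x \<bullet> (M *v x)"
    using assms by (auto simp: struct_def)
  define E where "E = Em J"
  define G where "G = M + E"
  obtain H where HG: "H ** G = mat 1" and GH: "G ** H = mat 1"
    using struct_inv[OF assms] unfolding invertible_def G_def E_def by blast
  have ME: "M ** E = 0" and EM: "E ** M = 0" using zout_Em[OF z] by (auto simp: E_def)
  have EE: "E ** E = E" by (simp add: E_def Em_Em)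
  have GE: "G ** E = E" by (simp add: G_def mm_add_r ME EE)
  have EG: "E ** G = E" by (simp add: G_def matrix_add_ldistrib EM EE)
  have HE: "H ** E = E" by (metis GE HG matrix_mul_assoc matrix_mul_lid)
  have EH: "E ** H = E" by (metis EG GH matrix_mul_assoc matrix_mul_rid)
  define X where "X = H - E"
  have MG: "M = G - E" by (simp add: G_def)
  have MX: "M ** X = mat 1 - E"
    by (simp add: X_def mm_diff_l ME) (simp add: MG mm_diff_r GH EH)
  have XM: "X ** M = mat 1 - E"
    by (simp add: X_def mm_diff_r EM) (simp add: MG mm_diff_l HG HE)
  have tE: "transpose E = E" by (simp add: E_def Em_def transpose_dg)
  have D: "Dm J = mat 1 - E" by (simp add: E_def Dm_eq)
  have DM: "(mat 1 - E) ** M = M" by (simp add: mm_diff_r EM)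
  have DX: "(mat 1 - E) ** X = X" by (simp add: mm_diff_r X_def mm_diff_l EH EE)
  have XD: "X ** (mat 1 - E) = X" by (simp add: mm_diff_r X_def mm_diff_l HE EE)
  have pen: "pen M X"
    unfolding pen_def using MX XM DM DX tE
    by (simp add: matrix_mul_assoc[symmetric] transpose_diff)
  then have pX: "pinv M = X" by (rule pinv_eq)
  have tH: "transpose H = H"
  proof -
    have tG: "transpose G = G" by (simp add: G_def transpose_add sy tE)
    have "transpose H ** G = mat 1" using GH by (metis matrix_transpose_mul tG transpose_mat)
    then have "transpose H = transpose H ** (G ** H)" using GH by simp
    also have "\<dots> = H" by (simp add: matrix_mul_assoc \<open>transpose H ** G = mat 1\<close>)
    finally show ?thesis .
  qed
  have tX: "transpose X = X" by (simp add: X_def transpose_diff tH tE)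
  have zX: "zout J X" unfolding zout_iff_Dm D using DX XD by (simp add: matrix_mul_assoc[symmetric])
  have pdX: "0 < x \<bullet> (X *v x)" if x0: "x \<noteq> 0" and xs: "\<forall>i. i \<notin> J \<longrightarrow> x $ i = 0" for x
  proof -
    have "Dm J *v x = x" using xs by (simp add: vec_eq_iff Dm_mv)
    then have xe: "M *v (X *v x) = x" using MX D by (simp add: matrix_vector_mul_assoc)
    then have "X *v x \<noteq> 0" using x0 by auto
    moreover have "\<forall>i. i \<notin> J \<longrightarrow> (X *v x) $ i = 0" using zout_mv[OF zX] by blast
    ultimately have "0 < (X *v x) \<bullet> (M *v (X *v x))" using pd by blast
    also have "(X *v x) \<bullet> (M *v (X *v x)) = x \<bullet> (X *v x)" using xe by (simp add: inner_commute)
    finally show ?thesis .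
  qed
  have sX: "struct J X" unfolding struct_def using tX zX pdX by blast
  show ?thesis
    apply (rule that[of H])
    using HG GH pX MX XM sX D by (auto simp: G_def E_def X_def)
qed



lemma qf_Dm: assumes "zout J M" shows "x \<bullet> (M *v x) = (Dm J *v x) \<bullet> (M *v (Dm J *v x))"
proof -
  have "x \<bullet> (M *v x) = x \<bullet> ((Dm J ** M ** Dm J) *v x)" using assms by (simp only: zout_iff_Dm)
  also have "\<dots> = (Dm J *v x) \<bullet> (M *v (Dm J *v x))"
    by (simp add: dot_transpose[of x] matrix_vector_mul_assoc[symmetric] Dm_def transpose_dg)
  finally show ?thesis .
qed

lemma sym_entry: "transpose M = (M::real^'k^'k) \<Longrightarrow> M $ j $ i = M $ i $ j"
proof -
  assume "transpose M = M"
  then have "M $ j $ i = transpose M $ j $ i" by simp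
  then show ?thesis by (simp add: transpose_def)
qed

lemma maskI_eq: "maskI I A = Dm I ** A ** Dm I"
  by (simp add: vec_eq_iff maskI_def Dm_def mm_dg_l mm_dg_r)

lemma struct_maskI: assumes "sym_pd A" shows "struct I (maskI I A)"
proof -
  have sy: "transpose A = A" and pd: "\<And>x. x \<noteq> 0 \<Longrightarrow> 0 < x \<bullet> (A *v x)" using assms by (auto simp: sym_pd_def)
  have t: "transpose (maskI I A) = maskI I A"
    by (simp add: vec_eq_iff maskI_def transpose_def sym_entry[OF sy] conj_commute)
  have z: "zout I (maskI I A)" by (simp add: zout_def maskI_def)
  have "0 < x \<bullet> (maskI I A *v x)" if "x \<noteq> 0" "\<forall>i. i \<notin> I \<longrightarrow> x $ i = 0" for x
  proof -
    have "Dm I *v x = x" using that by (simp add: vec_eq_iff Dm_mv)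
    moreover have "x \<bullet> (maskI I A *v x) = (Dm I *v x) \<bullet> (A *v (Dm I *v x))"
      by (simp add: maskI_eq dot_transpose[of x] matrix_vector_mul_assoc[symmetric] Dm_def transpose_dg)
    ultimately show ?thesis using pd that by simp
  qed
  then show ?thesis using t z by (simp add: struct_def)
qed

lemma struct_Adag: "sym_pd A \<Longrightarrow> struct I (Adag I A)"
  unfolding Adag_def by (metis struct_maskI struct_pinv)

lemma sum_mv: "(sum f S) *v (x::real^'k) = (\<Sum>s\<in>S. f s *v x)"
  by (simp add: vec_eq_iff mv_entry sum_component sum_distrib_right sum.swap[of _ UNIV])

lemma qf_infoM: "x \<bullet> (infoM \<I> \<nu> A *v x) = (\<Sum>I\<in>\<I>. \<nu> I * (x \<bullet> (Adag I A *v x)))"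
  by (simp add: infoM_def sum_mv inner_sum_right scaleR_matrix_vector_assoc[symmetric])

lemma infoM_entry: "infoM \<I> \<nu> A $ i $ j = (\<Sum>I\<in>\<I>. \<nu> I * Adag I A $ i $ j)"
  by (simp add: infoM_def sum_component)

definition Jset :: "'k set set \<Rightarrow> ('k set \<Rightarrow> real) \<Rightarrow> 'k set" where
  "Jset \<I> \<nu> = \<Union>{I\<in>\<I>. \<nu> I > 0}"

lemma struct_infoM:
  fixes \<I> :: "'k::finite set set"
  assumes A: "sym_pd A" and nn: "\<forall>I\<in>\<I>. \<nu> I \<ge> 0"
  shows "struct (Jset \<I> \<nu>) (infoM \<I> \<nu> A)"
proof -
  let ?J = "Jset \<I> \<nu>"
  have sI: "\<And>I. struct I (Adag I A)" using struct_Adag[OF A] .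
  have t: "transpose (infoM \<I> \<nu> A) = infoM \<I> \<nu> A"
  proof -
    have "Adag I A $ j $ i = Adag I A $ i $ j" for I i j using sI[of I] sym_entry by (auto simp: struct_def)
    then show ?thesis by (simp add: vec_eq_iff transpose_def infoM_entry)
  qed
  have z: "zout ?J (infoM \<I> \<nu> A)"
    unfolding zout_def
  proof (intro allI impI)
    fix i j assume ij: "i \<notin> ?J \<or> j \<notin> ?J"
    have "\<nu> I * Adag I A $ i $ j = 0" if "I \<in> \<I>" for I
    proof (cases "\<nu> I > 0")
      case True
      then have "i \<notin> I \<or> j \<notin> I" using ij that by (auto simp: Jset_def)
      then show ?thesis using sI[of I] by (simp add: struct_def zout_def)
    next
      case False then show ?thesis using nn that by force
    qed
    then show "infoM \<I> \<nu> A $ i $ j = 0" by (simp add: infoM_entry sum.neutral)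
  qed
  have "0 < x \<bullet> (infoM \<I> \<nu> A *v x)" if x0: "x \<noteq> 0" and xs: "\<forall>i. i \<notin> ?J \<longrightarrow> x $ i = 0" for x
  proof (rule ccontr)
    assume "\<not> ?thesis"
    then have le: "(\<Sum>I\<in>\<I>. \<nu> I * (x \<bullet> (Adag I A *v x))) \<le> 0" by (simp add: qf_infoM)
    have ge: "\<forall>I\<in>\<I>. 0 \<le> \<nu> I * (x \<bullet> (Adag I A *v x))"
      using nn struct_psd[OF sI] by (simp add: mult_nonneg_nonneg)
    have all0: "\<forall>I\<in>\<I>. \<nu> I * (x \<bullet> (Adag I A *v x)) = 0"
      using sum_nonneg_eq_0_iff[of \<I> "\<lambda>I. \<nu> I * (x \<bullet> (Adag I A *v x))"] le ge
      by (simp add: order_antisym sum_nonneg)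
    obtain i where xi: "x $ i \<noteq> 0" using x0 by (auto simp: vec_eq_iff)
    then have "i \<in> ?J" using xs by blast
    then obtain I where I: "I \<in> \<I>" "\<nu> I > 0" "i \<in> I" by (auto simp: Jset_def)
    have "Dm I *v x \<noteq> 0" using xi I by (auto simp: vec_eq_iff Dm_mv)
    moreover have "\<forall>j. j \<notin> I \<longrightarrow> (Dm I *v x) $ j = 0" by (simp add: Dm_mv)
    ultimately have "0 < (Dm I *v x) \<bullet> (Adag I A *v (Dm I *v x))" using sI[of I] by (simp add: struct_def)
    also have "\<dots> = x \<bullet> (Adag I A *v x)" using sI[of I] qf_Dm by (metis struct_def)
    finally show False using all0 I by force
  qed
  then show ?thesis using t z by (simp add: struct_def)
qed



definition phi :: "'k::finite set set \<Rightarrow> real^'k \<Rightarrow> ('k set \<Rightarrow> real) \<Rightarrow> real^'k^'k \<Rightarrow> real" where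
  "phi \<I> a \<nu> A = a \<bullet> (pinv (infoM \<I> \<nu> A) *v a)"

definition hh :: "'k::finite set set \<Rightarrow> real^'k \<Rightarrow> ('k set \<Rightarrow> real) \<Rightarrow> real^'k^'k \<Rightarrow> real^'k \<Rightarrow> real" where
  "hh \<I> a \<nu> A x = 2 * (a \<bullet> x) - (\<Sum>I\<in>\<I>. \<nu> I * (x \<bullet> (Adag I A *v x)))"

lemma var_gen:
  assumes S: "struct J M" and sa: "{i. a $ i \<noteq> 0} \<subseteq> J"
  shows "2 * (a \<bullet> x) - x \<bullet> (M *v x) \<le> a \<bullet> (pinv M *v a)"
    and "2 * (a \<bullet> (pinv M *v a)) - (pinv M *v a) \<bullet> (M *v (pinv M *v a)) = a \<bullet> (pinv M *v a)"
    and "M *v (pinv M *v a) = a"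
proof -
  obtain H where MX: "M ** pinv M = Dm J" using struct_pinv[OF S] by metis
  have sy: "transpose M = M" using S by (simp add: struct_def)
  define y where "y = pinv M *v a"
  have "Dm J *v a = a" using sa by (auto simp: vec_eq_iff Dm_mv)
  then have My: "M *v y = a" using MX by (simp add: y_def matrix_vector_mul_assoc)
  then show "M *v (pinv M *v a) = a" by (simp add: y_def)
  have ph: "a \<bullet> y = y \<bullet> (M *v y)" using My by (simp add: inner_commute)
  have ax: "a \<bullet> x = y \<bullet> (M *v x)" using My dot_sym[OF sy, of x y] by (simp add: inner_commute)
  have "0 \<le> (x - y) \<bullet> (M *v (x - y))" using struct_psd[OF S] .
  also have "\<dots> = x \<bullet> (M *v x) - x \<bullet> (M *v y) - y \<bullet> (M *v x) + y \<bullet> (M *v y)"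
    by (simp add: matrix_vector_mult_diff_distrib inner_diff_left inner_diff_right)
  also have "x \<bullet> (M *v y) = y \<bullet> (M *v x)" using dot_sym[OF sy] .
  finally show "2 * (a \<bullet> x) - x \<bullet> (M *v x) \<le> a \<bullet> (pinv M *v a)"
    using ax ph by (simp add: y_def[symmetric])
  show "2 * (a \<bullet> (pinv M *v a)) - (pinv M *v a) \<bullet> (M *v (pinv M *v a)) = a \<bullet> (pinv M *v a)"
    using ph by (simp add: y_def[symmetric])
qed

lemma var:
  assumes A: "sym_pd A" and nn: "\<forall>I\<in>\<I>. \<nu> I \<ge> 0" and sa: "{i. a $ i \<noteq> 0} \<subseteq> Jset \<I> \<nu>"
  shows "hh \<I> a \<nu> A x \<le> phi \<I> a \<nu> A" and "\<exists>z. hh \<I> a \<nu> A z = phi \<I> a \<nu> A"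
proof -
  note v = var_gen[OF struct_infoM[OF A nn] sa]
  show "hh \<I> a \<nu> A x \<le> phi \<I> a \<nu> A"
    using v(1)[of x] by (simp add: hh_def phi_def qf_infoM[symmetric])
  show "\<exists>z. hh \<I> a \<nu> A z = phi \<I> a \<nu> A"
    using v(2) by (intro exI[of _ "pinv (infoM \<I> \<nu> A) *v a"]) (simp add: hh_def phi_def qf_infoM[symmetric])
qed

lemma range_struct:
  assumes S: "struct J M"
  shows "a \<in> range (\<lambda>x. M *v x) \<longleftrightarrow> {i. a $ i \<noteq> 0} \<subseteq> J"
proof
  assume "a \<in> range (\<lambda>x. M *v x)"
  then obtain x where "a = M *v x" by blast
  then show "{i. a $ i \<noteq> 0} \<subseteq> J" using zout_mv[of J M] S by (auto simp: struct_def)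
next
  assume "{i. a $ i \<noteq> 0} \<subseteq> J"
  then have "M *v (pinv M *v a) = a" using var_gen(3)[OF S] by blast
  then show "a \<in> range (\<lambda>x. M *v x)" by (metis rangeI)
qed

lemma Fobj_char:
  assumes A: "sym_pd A" and nn: "\<forall>I\<in>\<I>. \<nu> I \<ge> 0"
  shows "Fobj \<I> a \<nu> A = (if {i. a $ i \<noteq> 0} \<subseteq> Jset \<I> \<nu> then ereal (phi \<I> a \<nu> A) else \<infinity>)"
  using range_struct[OF struct_infoM[OF A nn]] by (simp add: Fobj_def phi_def)

lemma unbounded:
  assumes A: "sym_pd A" and nn: "\<forall>I\<in>\<I>. \<nu> I \<ge> 0" and ns: "\<not> {i. a $ i \<noteq> 0} \<subseteq> Jset \<I> \<nu>"
  shows "\<exists>x. hh \<I> a \<nu> A x > B"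
proof -
  obtain i where ai: "a $ i \<noteq> 0" and iJ: "i \<notin> Jset \<I> \<nu>" using ns by blast
  define s where "s = (\<bar>B\<bar> + 1) / a $ i"
  define x where "x = s *\<^sub>R axis i (1::real)"
  have "\<nu> I * (x \<bullet> (Adag I A *v x)) = 0" if I: "I \<in> \<I>" for I
  proof (cases "\<nu> I > 0")
    case True
    then have iI: "i \<notin> I" using iJ I by (auto simp: Jset_def)
    have z: "zout I (Adag I A)" using struct_Adag[OF A] by (simp add: struct_def)
    have "Dm I *v x = 0" using iI by (auto simp: vec_eq_iff Dm_mv x_def axis_def)
    then show ?thesis using qf_Dm[OF z, of x] by simp
  next
    case False then show ?thesis using nn I by force
  qed
  then have "(\<Sum>I\<in>\<I>. \<nu> I * (x \<bullet> (Adag I A *v x))) = 0" by (intro sum.neutral) blast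
  then have "hh \<I> a \<nu> A x = 2 * (a \<bullet> x)" by (simp add: hh_def)
  also have "a \<bullet> x = s * a $ i" by (simp add: x_def inner_axis)
  also have "s * a $ i = \<bar>B\<bar> + 1" using ai by (simp add: s_def)
  finally have "hh \<I> a \<nu> A x = 2 * (\<bar>B\<bar> + 1)" .
  then show ?thesis by (intro exI[of _ x]) (simp add: abs_if)
qed

lemma mv_scaleR: "(A::real^'n^'m) *v (c *\<^sub>R x) = c *\<^sub>R (A *v x)"
  by (simp add: vec_eq_iff mv_entry sum_distrib_left algebra_simps)

lemma hh_scale:
  assumes "c > 0"
  shows "hh \<I> a (\<lambda>I. c * \<nu> I) A x = hh \<I> a \<nu> A (c *\<^sub>R x) / c"
proof -
  have q: "(c *\<^sub>R x) \<bullet> (M *v (c *\<^sub>R x)) = c * c * (x \<bullet> (M *v x))" for M :: "real^'a^'a"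
    by (simp add: mv_scaleR)
  show ?thesis using assms
    unfolding hh_def q by (simp add: sum_distrib_left sum_divide_distrib field_simps)
qed

lemma hh_mono:
  assumes A: "sym_pd A" and le: "\<forall>I\<in>\<I>. \<mu> I \<le> \<nu> I"
  shows "hh \<I> a \<nu> A x \<le> hh \<I> a \<mu> A x"
proof -
  have "(\<Sum>I\<in>\<I>. \<mu> I * (x \<bullet> (Adag I A *v x))) \<le> (\<Sum>I\<in>\<I>. \<nu> I * (x \<bullet> (Adag I A *v x)))"
    by (rule sum_mono) (use le struct_psd[OF struct_Adag[OF A]] in \<open>simp add: mult_right_mono\<close>)
  then show ?thesis by (simp add: hh_def)
qed



lemma det_tendsto:
  fixes G :: "'a \<Rightarrow> real^'k::finite^'k"
  assumes "\<And>i j. ((\<lambda>x. G x $ i $ j) \<longlongrightarrow> L $ i $ j) F"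
  shows "((\<lambda>x. det (G x)) \<longlongrightarrow> det L) F"
  unfolding det_def by (intro tendsto_intros assms)

definition cramv :: "real^'k::finite^'k \<Rightarrow> real^'k \<Rightarrow> real^'k" where
  "cramv G b = (\<chi> k. det (\<chi> i j. if j = k then b $ i else G $ i $ j) / det G)"

lemma pinv_cramer:
  assumes S: "struct J M" shows "pinv M *v b = cramv (M + Em J) b - Em J *v b"
proof -
  obtain H where HG: "H ** (M + Em J) = mat 1" and GH: "(M + Em J) ** H = mat 1" and p: "pinv M = H - Em J"
    using struct_pinv[OF S] by metis
  have "det (M + Em J) \<noteq> 0" using HG GH invertible_det_nz invertible_def by blast
  moreover have "(M + Em J) *v (H *v b) = b" using GH by (simp add: matrix_vector_mul_assoc)
  ultimately have "H *v b = cramv (M + Em J) b" using cramer[of "M + Em J" "H *v b" b] by (simp add: cramv_def)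
  then show ?thesis by (simp add: p matrix_vector_mult_diff_rdistrib)
qed

lemma cramv_tendsto:
  fixes G :: "'a \<Rightarrow> real^'k::finite^'k"
  assumes "\<And>i j. ((\<lambda>x. G x $ i $ j) \<longlongrightarrow> L $ i $ j) F" and "det L \<noteq> 0"
  shows "((\<lambda>x. cramv (G x) b) \<longlongrightarrow> cramv L b) F"
  unfolding cramv_def
proof (intro tendsto_vec_lambda tendsto_divide det_tendsto assms)
  fix k i j
  show "((\<lambda>x. (\<chi> i j. if j = k then b $ i else G x $ i $ j) $ i $ j) \<longlongrightarrow>
          (\<chi> i j. if j = k then b $ i else L $ i $ j) $ i $ j) F"
    by (simp add: assms)
qed

lemma pinv_tendsto:
  fixes M :: "'a \<Rightarrow> real^'k::finite^'k"
  assumes ev: "eventually (\<lambda>x. struct J (M x)) F" and SL: "struct J L"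
    and lim: "\<And>i j. ((\<lambda>x. M x $ i $ j) \<longlongrightarrow> L $ i $ j) F"
  shows "((\<lambda>x. pinv (M x) *v b) \<longlongrightarrow> pinv L *v b) F"
proof -
  have d: "det (L + Em J) \<noteq> 0" using struct_inv[OF SL] invertible_det_nz by blast
  have "((\<lambda>x. cramv (M x + Em J) b - Em J *v b) \<longlongrightarrow> cramv (L + Em J) b - Em J *v b) F"
    by (intro tendsto_diff tendsto_const cramv_tendsto d) (simp add: tendsto_add lim)
  then have "((\<lambda>x. cramv (M x + Em J) b - Em J *v b) \<longlongrightarrow> pinv L *v b) F"
    by (simp add: pinv_cramer[OF SL])
  then show ?thesis
    by (rule Lim_transform_eventually) (use ev in \<open>auto elim: eventually_mono simp: pinv_cramer\<close>)
qed

lemma mv_axis: "(M *v axis j (1::real)) $ i = M $ i $ j"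
  by (simp add: mv_entry axis_def ifm2)

lemma pinv_entry_tendsto:
  fixes M :: "'a \<Rightarrow> real^'k::finite^'k"
  assumes ev: "eventually (\<lambda>x. struct J (M x)) F" and SL: "struct J L"
    and lim: "\<And>i j. ((\<lambda>x. M x $ i $ j) \<longlongrightarrow> L $ i $ j) F"
  shows "((\<lambda>x. pinv (M x) $ i $ j) \<longlongrightarrow> pinv L $ i $ j) F"
  using tendsto_vec_nth[OF pinv_tendsto[OF ev SL lim, of "axis j 1"], of i] by (simp add: mv_axis)

lemma Adag_tendsto:
  fixes A :: "'a \<Rightarrow> real^'k::finite^'k"
  assumes ev: "eventually (\<lambda>x. sym_pd (A x)) F" and SL: "sym_pd L" and lim: "(A \<longlongrightarrow> L) F"
  shows "((\<lambda>x. Adag I (A x) $ i $ j) \<longlongrightarrow> Adag I L $ i $ j) F"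
  unfolding Adag_def
proof (rule pinv_entry_tendsto)
  show "eventually (\<lambda>x. struct I (maskI I (A x))) F" using ev by (auto elim: eventually_mono intro: struct_maskI)
  show "struct I (maskI I L)" using SL by (rule struct_maskI)
  fix i j
  show "((\<lambda>x. maskI I (A x) $ i $ j) \<longlongrightarrow> maskI I L $ i $ j) F"
    using tendsto_vec_nth[OF tendsto_vec_nth[OF lim]] by (cases "i \<in> I \<and> j \<in> I") (auto simp: maskI_def)
qed

lemma qf_entry: "z \<bullet> (M *v z) = (\<Sum>i\<in>UNIV. z $ i * (\<Sum>j\<in>UNIV. M $ i $ j * z $ j))"
  by (simp add: inner_vec_def mv_entry)

lemma hh_tendsto:
  fixes A :: "'a \<Rightarrow> real^'k::finite^'k"
  assumes ev: "eventually (\<lambda>x. sym_pd (A x)) F" and SL: "sym_pd L" and lim: "(A \<longlongrightarrow> L) F"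
    and nl: "\<And>I. ((\<lambda>x. \<nu> x I) \<longlongrightarrow> \<nu>b I) F"
  shows "((\<lambda>x. hh \<I> a (\<nu> x) (A x) z) \<longlongrightarrow> hh \<I> a \<nu>b L z) F"
  unfolding hh_def qf_entry
  by (intro tendsto_intros nl Adag_tendsto[OF ev SL lim])

lemma phi_tendsto:
  fixes A :: "'a \<Rightarrow> real^'k::finite^'k"
  assumes ev: "eventually (\<lambda>x. sym_pd (A x)) F" and SL: "sym_pd L" and lim: "(A \<longlongrightarrow> L) F"
    and nn: "\<forall>I\<in>\<I>. \<nu> I \<ge> 0"
  shows "((\<lambda>x. phi \<I> a \<nu> (A x)) \<longlongrightarrow> phi \<I> a \<nu> L) F"
proof -
  have "((\<lambda>x. pinv (infoM \<I> \<nu> (A x)) *v a) \<longlongrightarrow> pinv (infoM \<I> \<nu> L) *v a) F"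
  proof (rule pinv_tendsto)
    show "eventually (\<lambda>x. struct (Jset \<I> \<nu>) (infoM \<I> \<nu> (A x))) F"
      using ev by (rule eventually_mono) (rule struct_infoM[OF _ nn])
    show "struct (Jset \<I> \<nu>) (infoM \<I> \<nu> L)" using SL nn by (rule struct_infoM)
    fix i j
    show "((\<lambda>x. infoM \<I> \<nu> (A x) $ i $ j) \<longlongrightarrow> infoM \<I> \<nu> L $ i $ j) F"
      unfolding infoM_entry by (intro tendsto_intros Adag_tendsto[OF ev SL lim])
  qed
  then show ?thesis unfolding phi_def by (intro tendsto_intros)
qed



lemma Nfeas_supp:
  assumes "n \<in> Nfeas \<I> a c B0 t"
  shows "{i. a $ i \<noteq> 0} \<subseteq> Jset \<I> (\<lambda>I. real (n I))"
  using assms by (auto simp: Nfeas_def Jset_def)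

lemma chain:
  assumes A: "sym_pd A" and t: "t > 0" and n: "n \<in> n_star \<I> a c B0 t A"
    and m: "m \<in> Nfeas \<I> a c B0 t"
    and nn0: "\<forall>I\<in>\<I>. \<nu>0 I \<ge> 0" and sa0: "{i. a $ i \<noteq> 0} \<subseteq> Jset \<I> \<nu>0"
    and s: "s > 0" and ms: "\<forall>I\<in>\<I>. s * \<nu>0 I \<le> real (m I) / t"
  shows "hh \<I> a (\<lambda>I. real (n I) / t) A x \<le> phi \<I> a \<nu>0 A / s"
proof -
  have nF: "n \<in> Nfeas \<I> a c B0 t" and nmin: "phi \<I> a (\<lambda>I. real (n I)) A \<le> phi \<I> a (\<lambda>I. real (m I)) A"
    using n m by (auto simp: n_star_def phi_def)
  have nnn: "\<forall>I\<in>\<I>. (0::real) \<le> real (n I)" and nnm: "\<forall>I\<in>\<I>. (0::real) \<le> real (m I)" by auto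
  have fn: "(\<lambda>I. real (n I) / t) = (\<lambda>I. (1/t) * real (n I))" by auto
  have fm: "(\<lambda>I. real (m I) / t) = (\<lambda>I. (1/t) * real (m I))" by auto
  have "hh \<I> a (\<lambda>I. real (n I) / t) A x = t * hh \<I> a (\<lambda>I. real (n I)) A ((1/t) *\<^sub>R x)"
    using hh_scale[of "1/t" \<I> a "\<lambda>I. real (n I)" A x] t unfolding fn[symmetric] by simp
  also have "\<dots> \<le> t * phi \<I> a (\<lambda>I. real (n I)) A"
    using var(1)[OF A nnn Nfeas_supp[OF nF]] t by (simp add: mult_left_mono)
  also have "\<dots> \<le> t * phi \<I> a (\<lambda>I. real (m I)) A" using nmin t by (simp add: mult_left_mono)
  also obtain z where "phi \<I> a (\<lambda>I. real (m I)) A = hh \<I> a (\<lambda>I. real (m I)) A z"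
    using var(2)[OF A nnm Nfeas_supp[OF m]] by metis
  also have "t * hh \<I> a (\<lambda>I. real (m I)) A z = hh \<I> a (\<lambda>I. real (m I) / t) A (t *\<^sub>R z)"
    using hh_scale[of "1/t" \<I> a "\<lambda>I. real (m I)" A "t *\<^sub>R z"] t unfolding fm[symmetric] by simp
  also have "\<dots> \<le> hh \<I> a (\<lambda>I. s * \<nu>0 I) A (t *\<^sub>R z)"
    using ms by (intro hh_mono[OF A]) auto
  also have "\<dots> = hh \<I> a \<nu>0 A (s *\<^sub>R t *\<^sub>R z) / s" using s by (simp add: hh_scale)
  also have "\<dots> \<le> phi \<I> a \<nu>0 A / s"
    using var(1)[OF A nn0 sa0] s by (simp add: divide_right_mono)
  finally show ?thesis .
qed

definition mround :: "'k set set \<Rightarrow> ('k set \<Rightarrow> real) \<Rightarrow> real \<Rightarrow> 'k set \<Rightarrow> nat" where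
  "mround \<I> \<nu> t I = (if I \<in> \<I> then nat \<lfloor>t * \<nu> I\<rfloor> else 0)"

lemma mround_feas:
  fixes \<I> :: "'k::finite set set"
  assumes t: "t > 0" and K: "\<nu> \<in> Kset \<I> c B0" and sa: "{i. a $ i \<noteq> 0} \<subseteq> Jset \<I> \<nu>"
    and cn: "\<forall>I\<in>\<I>. \<forall>j. c I $ j \<ge> 0"
    and big: "\<forall>I\<in>\<I>. \<nu> I > 0 \<longrightarrow> t * \<nu> I \<ge> 1"
  shows "mround \<I> \<nu> t \<in> Nfeas \<I> a c B0 t"
proof -
  have nn: "\<forall>I\<in>\<I>. \<nu> I \<ge> 0" and bud: "\<forall>j. (\<Sum>I\<in>\<I>. \<nu> I * c I $ j) \<le> B0 $ j"
    using K by (auto simp: Kset_def)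
  have le: "real (mround \<I> \<nu> t I) \<le> t * \<nu> I" if "I \<in> \<I>" for I
    using that nn t by (simp add: mround_def)
  have "(\<Sum>I\<in>\<I>. real (mround \<I> \<nu> t I) * c I $ j) \<le> t * B0 $ j" for j
  proof -
    have "(\<Sum>I\<in>\<I>. real (mround \<I> \<nu> t I) * c I $ j) \<le> (\<Sum>I\<in>\<I>. t * \<nu> I * c I $ j)"
      by (intro sum_mono mult_right_mono le) (use cn in auto)
    also have "\<dots> = t * (\<Sum>I\<in>\<I>. \<nu> I * c I $ j)" by (simp add: sum_distrib_left mult.assoc)
    also have "\<dots> \<le> t * B0 $ j" using bud t by (simp add: mult_left_mono)
    finally show ?thesis .
  qed
  moreover have "{i. a $ i \<noteq> 0} \<subseteq> \<Union>{I\<in>\<I>. mround \<I> \<nu> t I > 0}"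
  proof
    fix i assume "i \<in> {i. a $ i \<noteq> 0}"
    then obtain I where I: "I \<in> \<I>" "\<nu> I > 0" "i \<in> I" using sa by (auto simp: Jset_def)
    then have "t * \<nu> I \<ge> 1" using big by auto
    then have "mround \<I> \<nu> t I > 0" using I by (simp add: mround_def)
    then show "i \<in> \<Union>{I\<in>\<I>. mround \<I> \<nu> t I > 0}" using I by blast
  qed
  ultimately show ?thesis by (auto simp: Nfeas_def mround_def)
qed

lemma mround_low:
  assumes t: "t > 0" and s: "s < 1" and nn: "\<nu> I \<ge> 0" and I: "I \<in> \<I>"
    and big: "\<nu> I > 0 \<longrightarrow> t * ((1 - s) * \<nu> I) \<ge> 1"
  shows "s * \<nu> I \<le> real (mround \<I> \<nu> t I) / t"
proof (cases "\<nu> I > 0")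
  case False
  then have "\<nu> I = 0" using nn by auto
  then show ?thesis using t by simp
next
  case True
  have "t * \<nu> I - 1 \<le> real (mround \<I> \<nu> t I)"
    using I t nn by (simp add: mround_def)
  moreover have "s * \<nu> I * t \<le> t * \<nu> I - 1" using big True by (simp add: algebra_simps)
  ultimately have "s * \<nu> I * t \<le> real (mround \<I> \<nu> t I)" by linarith
  then show ?thesis using t by (simp add: field_simps)
qed



lemma supp_nu0:
  fixes \<I> :: "'k::finite set set" and c :: "'k set \<Rightarrow> real^'m::finite"
  assumes A: "sym_pd A" and sa: "{i. a $ i \<noteq> 0} \<subseteq> \<Union>\<I>"
    and cn: "\<forall>I\<in>\<I>. \<forall>j. c I $ j \<ge> 0" and B0: "\<forall>j. B0 $ j > 0"
    and K: "\<nu>0 \<in> Kset \<I> c B0" and opt: "\<forall>\<mu>\<in>Kset \<I> c B0. Fobj \<I> a \<nu>0 A \<le> Fobj \<I> a \<mu> A"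
  shows "{i. a $ i \<noteq> 0} \<subseteq> Jset \<I> \<nu>0"
proof -
  define S where "S j = (\<Sum>I\<in>\<I>. c I $ j)" for j
  have S0: "S j \<ge> 0" for j using cn by (simp add: S_def sum_nonneg)
  define \<eta> where "\<eta> = Min (range (\<lambda>j. B0 $ j / (1 + S j)))"
  have \<eta>pos: "\<eta> > 0" unfolding \<eta>_def using B0 S0
    by (subst Min_gr_iff) (auto intro!: divide_pos_pos add_pos_nonneg)
  have \<eta>le: "\<eta> \<le> B0 $ j / (1 + S j)" for j unfolding \<eta>_def by (rule Min_le) auto
  define \<mu> where "\<mu> I = (if I \<in> \<I> then \<eta> else 0)" for I
  have "\<mu> \<in> Kset \<I> c B0"
    unfolding Kset_def
  proof (intro CollectI conjI allI ballI impI)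
    fix j
    have "(\<Sum>I\<in>\<I>. \<mu> I * c I $ j) = \<eta> * S j" by (simp add: \<mu>_def S_def sum_distrib_left)
    also have "\<dots> \<le> B0 $ j / (1 + S j) * S j" using \<eta>le[of j] S0[of j] by (rule mult_right_mono)
    also have "\<dots> \<le> B0 $ j"
    proof -
      have p: "1 + S j > 0" using S0[of j] by linarith
      have "B0 $ j * S j \<le> B0 $ j * (1 + S j)" using B0 by (simp add: algebra_simps less_imp_le)
      then show ?thesis using p by (simp add: pos_divide_le_eq mult.commute)
    qed
    finally show "(\<Sum>I\<in>\<I>. \<mu> I * c I $ j) \<le> B0 $ j" .
  qed (use \<eta>pos in \<open>auto simp: \<mu>_def\<close>)
  moreover have "\<forall>I\<in>\<I>. \<mu> I \<ge> 0" using \<eta>pos by (simp add: \<mu>_def)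
  moreover have "{i. a $ i \<noteq> 0} \<subseteq> Jset \<I> \<mu>" using sa \<eta>pos by (auto simp: Jset_def \<mu>_def)
  ultimately have "Fobj \<I> a \<mu> A \<noteq> \<infinity>" using Fobj_char[OF A] by simp
  then have "Fobj \<I> a \<nu>0 A \<noteq> \<infinity>" using opt \<open>\<mu> \<in> Kset \<I> c B0\<close> by (metis ereal_infty_less_eq(1))
  moreover have "\<forall>I\<in>\<I>. \<nu>0 I \<ge> 0" using K by (simp add: Kset_def)
  ultimately show ?thesis using Fobj_char[OF A] by (auto split: if_splits)
qed



theorem lemmaE5:
  fixes \<I> :: "'k::finite set set" and a :: "real^'k"
    and c :: "'k set \<Rightarrow> real^'m::finite" and B0 :: "real^'m"
    and Astar :: "real^'k^'k" and A :: "nat \<Rightarrow> real^'k^'k"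
    and \<nu>0 :: "'k set \<Rightarrow> real"
  assumes "\<forall>I\<in>\<I>. I \<noteq> {}"
    and "a \<noteq> 0"
    and "{i. a $ i \<noteq> 0} \<subseteq> \<Union>\<I>"
    and "\<forall>I\<in>\<I>. (\<forall>j. c I $ j \<ge> 0) \<and> (\<exists>j. c I $ j > 0)"
    and "\<forall>j. B0 $ j > 0"
    and "sym_pd Astar"
    and "nu_star \<I> a c B0 Astar = {\<nu>0}"
    and "\<forall>N. sym_pd (A N)"
    and "A \<longlonglongrightarrow> Astar"
  shows "\<forall>\<epsilon>>0. \<exists>N1::real. \<forall>(N::nat) (t::real) n.
           real N \<ge> N1 \<longrightarrow> t \<ge> N1 \<longrightarrow> n \<in> n_star \<I> a c B0 t (A N) \<longrightarrow>
           sqrt (\<Sum>I\<in>\<I>. (real (n I) / t - \<nu>0 I)\<^sup>2) < \<epsilon>"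
proof (rule ccontr)
  note sa = assms(3) and cc = assms(4) and B0 = assms(5) and As = assms(6) and ns = assms(7)
    and AN = assms(8) and lim = assms(9)
  have cn: "\<forall>I\<in>\<I>. \<forall>j. c I $ j \<ge> 0" using cc by blast
  have K0: "\<nu>0 \<in> Kset \<I> c B0" and opt: "\<forall>\<mu>\<in>Kset \<I> c B0. Fobj \<I> a \<nu>0 Astar \<le> Fobj \<I> a \<mu> Astar"
    using ns by (auto simp: nu_star_def)
  have nn0: "\<forall>I\<in>\<I>. \<nu>0 I \<ge> 0" using K0 by (simp add: Kset_def)
  have sa0: "{i. a $ i \<noteq> 0} \<subseteq> Jset \<I> \<nu>0" by (rule supp_nu0[OF As sa cn B0 K0 opt])
  define phi0 where "phi0 = phi \<I> a \<nu>0 Astar"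
  have F0: "Fobj \<I> a \<nu>0 Astar = ereal phi0" using Fobj_char[OF As nn0] sa0 by (simp add: phi0_def)
  assume "\<not> ?thesis"
  then obtain \<epsilon> where \<epsilon>: "\<epsilon> > 0" and bad: "\<forall>N1::real. \<exists>(N::nat) (t::real) n.
           real N \<ge> N1 \<and> t \<ge> N1 \<and> n \<in> n_star \<I> a c B0 t (A N) \<and>
           \<not> sqrt (\<Sum>I\<in>\<I>. (real (n I) / t - \<nu>0 I)\<^sup>2) < \<epsilon>" by blast
  have h1: "\<forall>k::nat. \<exists>N t n. real N \<ge> real k + 1 \<and> t \<ge> real k + 1 \<and>
      n \<in> n_star \<I> a c B0 t (A N) \<and>
      \<not> sqrt (\<Sum>I\<in>\<I>. (real (n I) / t - \<nu>0 I)\<^sup>2) < \<epsilon>"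
  proof
    fix k :: nat show "\<exists>N t n. real N \<ge> real k + 1 \<and> t \<ge> real k + 1 \<and>
      n \<in> n_star \<I> a c B0 t (A N) \<and>
      \<not> sqrt (\<Sum>I\<in>\<I>. (real (n I) / t - \<nu>0 I)\<^sup>2) < \<epsilon>"
      using bad[rule_format, of "real k + 1"] .
  qed
  obtain NN where h2: "\<forall>k::nat. \<exists>t n. real (NN k) \<ge> real k + 1 \<and> t \<ge> real k + 1 \<and>
      n \<in> n_star \<I> a c B0 t (A (NN k)) \<and>
      \<not> sqrt (\<Sum>I\<in>\<I>. (real (n I) / t - \<nu>0 I)\<^sup>2) < \<epsilon>"
    using choice[OF h1] by (elim exE)
  obtain tt where h3: "\<forall>k::nat. \<exists>n. real (NN k) \<ge> real k + 1 \<and> tt k \<ge> real k + 1 \<and>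
      n \<in> n_star \<I> a c B0 (tt k) (A (NN k)) \<and>
      \<not> sqrt (\<Sum>I\<in>\<I>. (real (n I) / tt k - \<nu>0 I)\<^sup>2) < \<epsilon>"
    using choice[OF h2] by (elim exE)
  obtain nn where bk: "\<forall>k::nat. real (NN k) \<ge> real k + 1 \<and> tt k \<ge> real k + 1 \<and>
      nn k \<in> n_star \<I> a c B0 (tt k) (A (NN k)) \<and>
      \<not> sqrt (\<Sum>I\<in>\<I>. (real (nn k I) / tt k - \<nu>0 I)\<^sup>2) < \<epsilon>"
    using choice[OF h3] by (elim exE)
  have NNk: "real (NN k) \<ge> real k + 1" and ttk: "tt k \<ge> real k + 1"
    and nnk: "nn k \<in> n_star \<I> a c B0 (tt k) (A (NN k))"
    and dk: "sqrt (\<Sum>I\<in>\<I>. (real (nn k I) / tt k - \<nu>0 I)\<^sup>2) \<ge> \<epsilon>" for k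
    using bk[rule_format, of k] by auto
  have tpos: "tt k > 0" for k using ttk[of k] by linarith
  have nF: "nn k \<in> Nfeas \<I> a c B0 (tt k)" for k using nnk[of k] by (simp add: n_star_def)
  have nout: "nn k I = 0" if "I \<notin> \<I>" for k I using nF[of k] that by (simp add: Nfeas_def)
  have nbud: "(\<Sum>I\<in>\<I>. real (nn k I) * c I $ j) \<le> tt k * B0 $ j" for k j
    using nF[of k] by (simp add: Nfeas_def)
  define v where "v k = (\<chi> I. real (nn k I) / tt k)" for k
  define jj where "jj I = (SOME j. c I $ j > 0)" for I
  have jj: "c I $ jj I > 0" if "I \<in> \<I>" for I using cc that unfolding jj_def by (metis someI_ex)
  define bd where "bd I = (if I \<in> \<I> then B0 $ jj I / c I $ jj I else 0)" for I
  have vb: "\<bar>v k $ I\<bar> \<le> bd I" for k I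
  proof (cases "I \<in> \<I>")
    case True
    have "real (nn k I) * c I $ jj I \<le> (\<Sum>I'\<in>\<I>. real (nn k I') * c I' $ jj I)"
      using True cn by (intro member_le_sum) (auto)
    also have "\<dots> \<le> tt k * B0 $ jj I" using nbud[of k "jj I"] by simp
    finally have "real (nn k I) * c I $ jj I \<le> tt k * B0 $ jj I" .
    then have "real (nn k I) / tt k \<le> B0 $ jj I / c I $ jj I"
      using jj[OF True] tpos[of k] by (simp add: field_simps)
    then show ?thesis using True tpos[of k] by (simp add: v_def bd_def)
  next
    case False then show ?thesis by (simp add: v_def bd_def nout)
  qed
  have "bounded (range v)"
    unfolding bounded_iff
  proof (intro exI ballI)
    fix y assume "y \<in> range v"
    then obtain k where y: "y = v k" by blast
    have "norm y \<le> (\<Sum>I\<in>UNIV. \<bar>y $ I\<bar>)" by (rule norm_le_l1_cart)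
    also have "\<dots> \<le> (\<Sum>I\<in>UNIV. bd I)" using vb y by (intro sum_mono) auto
    finally show "norm y \<le> (\<Sum>I\<in>UNIV. bd I)" .
  qed
  then obtain l r where r: "strict_mono r" and vl: "(v \<circ> r) \<longlonglongrightarrow> l"
    using bounded_imp_convergent_subsequence by blast
  define nub where "nub I = l $ I" for I
  define nus where "nus k I = real (nn (r k) I) / tt (r k)" for k I
  have cI: "(\<lambda>k. nus k I) \<longlonglongrightarrow> nub I" for I
    using tendsto_vec_nth[OF vl, of I] by (simp add: nus_def nub_def v_def o_def)
  define Ak where "Ak k = A (NN (r k))" for k
  have "filterlim (\<lambda>k. NN (r k)) sequentially sequentially"
    unfolding filterlim_at_top eventually_sequentially
  proof (intro allI)
    fix Z :: nat
    show "\<exists>N. \<forall>k\<ge>N. Z \<le> NN (r k)"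
    proof (intro exI[of _ Z] allI impI)
      fix k assume "Z \<le> k"
      moreover have "k \<le> r k" using r by (rule seq_suble)
      ultimately show "Z \<le> NN (r k)" using NNk[of "r k"] by linarith
    qed
  qed
  then have Akl: "Ak \<longlonglongrightarrow> Astar" unfolding Ak_def using lim by (rule filterlim_compose[rotated])
  have evA: "eventually (\<lambda>k. sym_pd (Ak k)) sequentially" using AN by (simp add: Ak_def)
  have nubK: "nub \<in> Kset \<I> c B0"
    unfolding Kset_def
  proof (intro CollectI conjI allI ballI impI)
    fix I assume "I \<notin> \<I>"
    then have "(\<lambda>k. nus k I) = (\<lambda>k. 0)" by (simp add: nus_def nout fun_eq_iff)
    then show "nub I = 0" using cI[of I] LIMSEQ_unique tendsto_const by metis
  next
    fix I assume "I \<in> \<I>"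
    show "0 \<le> nub I" using cI[of I] by (rule LIMSEQ_le_const) (use tpos in \<open>auto simp: nus_def intro!: exI[of _ 0] divide_nonneg_pos\<close>)
  next
    fix j
    have "(\<lambda>k. \<Sum>I\<in>\<I>. nus k I * c I $ j) \<longlonglongrightarrow> (\<Sum>I\<in>\<I>. nub I * c I $ j)"
      by (intro tendsto_intros cI)
    moreover have "(\<Sum>I\<in>\<I>. nus k I * c I $ j) \<le> B0 $ j" for k
    proof -
      have "(\<Sum>I\<in>\<I>. nus k I * c I $ j) = (\<Sum>I\<in>\<I>. real (nn (r k) I) * c I $ j) / tt (r k)"
        by (simp add: nus_def sum_divide_distrib)
      also have "\<dots> \<le> B0 $ j" using nbud[of "r k" j] tpos[of "r k"] by (simp add: field_simps)
      finally show ?thesis .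
    qed
    ultimately show "(\<Sum>I\<in>\<I>. nub I * c I $ j) \<le> B0 $ j"
      by (intro LIMSEQ_le_const2) auto
  qed
  have nnb: "\<forall>I\<in>\<I>. nub I \<ge> 0" using nubK by (simp add: Kset_def)
  have dist: "sqrt (\<Sum>I\<in>\<I>. (nub I - \<nu>0 I)\<^sup>2) \<ge> \<epsilon>"
  proof -
    have "(\<lambda>k. sqrt (\<Sum>I\<in>\<I>. (nus k I - \<nu>0 I)\<^sup>2)) \<longlonglongrightarrow> sqrt (\<Sum>I\<in>\<I>. (nub I - \<nu>0 I)\<^sup>2)"
      by (intro tendsto_intros cI)
    then show ?thesis by (rule LIMSEQ_le_const) (use dk in \<open>auto simp: nus_def\<close>)
  qed
  have key: "hh \<I> a nub Astar x \<le> phi0" for x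
  proof (rule field_le_mult_one_interval)
    fix s :: real assume s0: "0 < s" and s1: "s < 1"
    define T where "T = (\<Sum>I\<in>{I\<in>\<I>. \<nu>0 I > 0}. 1 / ((1 - s) * \<nu>0 I))"
    have TI: "1 / ((1 - s) * \<nu>0 I) \<le> T" if "I \<in> \<I>" "\<nu>0 I > 0" for I
      unfolding T_def using that s1
      by (intro member_le_sum) (auto intro!: divide_nonneg_pos mult_pos_pos)
    have ev: "eventually (\<lambda>k. hh \<I> a (nus k) (Ak k) x \<le> phi \<I> a \<nu>0 (Ak k) / s) sequentially"
      unfolding eventually_sequentially
    proof (intro exI[of _ "nat \<lceil>T\<rceil>"] allI impI)
      fix k assume k: "nat \<lceil>T\<rceil> \<le> k"
      define t where "t = tt (r k)"
      have t0: "t > 0" using tpos by (simp add: t_def)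
      have "real k \<le> real (r k)" using seq_suble[OF r, of k] by simp
      then have tT: "t \<ge> T + 1" using k ttk[of "r k"] unfolding t_def by linarith
      have big: "t * ((1 - s) * \<nu>0 I) \<ge> 1" if "I \<in> \<I>" "\<nu>0 I > 0" for I
      proof -
        have p: "(1 - s) * \<nu>0 I > 0" using that s1 by simp
        have "1 / ((1 - s) * \<nu>0 I) \<le> t" using TI[OF that] tT by linarith
        then show ?thesis using p by (simp add: field_simps)
      qed
      have big2: "\<forall>I\<in>\<I>. \<nu>0 I > 0 \<longrightarrow> t * \<nu>0 I \<ge> 1"
      proof (intro ballI impI)
        fix I assume "I \<in> \<I>" "\<nu>0 I > 0"
        then have "t * ((1 - s) * \<nu>0 I) \<ge> 1" by (rule big)
        moreover have "t * ((1 - s) * \<nu>0 I) \<le> t * \<nu>0 I"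
          using t0 s0 \<open>\<nu>0 I > 0\<close> by (simp add: mult_left_mono mult_right_mono algebra_simps)
        ultimately show "t * \<nu>0 I \<ge> 1" by linarith
      qed
      have mF: "mround \<I> \<nu>0 t \<in> Nfeas \<I> a c B0 t"
        by (rule mround_feas[OF t0 K0 sa0 cn big2])
      have ms: "\<forall>I\<in>\<I>. s * \<nu>0 I \<le> real (mround \<I> \<nu>0 t I) / t"
        using mround_low[OF t0 s1] nn0 big by blast
      show "hh \<I> a (nus k) (Ak k) x \<le> phi \<I> a \<nu>0 (Ak k) / s"
      proof -
        have nk: "nn (r k) \<in> n_star \<I> a c B0 t (A (NN (r k)))" using nnk[of "r k"] by (simp add: t_def)
        have "nus k = (\<lambda>I. real (nn (r k) I) / t)" by (simp add: nus_def t_def fun_eq_iff)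
        then show ?thesis using chain[OF AN[rule_format] t0 nk mF nn0 sa0 s0 ms]
          by (simp add: Ak_def)
      qed
    qed
    have l1: "(\<lambda>k. hh \<I> a (nus k) (Ak k) x) \<longlonglongrightarrow> hh \<I> a nub Astar x"
      by (rule hh_tendsto[OF evA As Akl cI])
    have l2: "(\<lambda>k. phi \<I> a \<nu>0 (Ak k) / s) \<longlonglongrightarrow> phi0 / s"
      unfolding phi0_def by (intro tendsto_divide phi_tendsto[OF evA As Akl nn0] tendsto_const) (use s0 in auto)
    have "hh \<I> a nub Astar x \<le> phi0 / s"
      by (rule tendsto_le[OF sequentially_bot l2 l1 ev])
    then show "s * hh \<I> a nub Astar x \<le> phi0" using s0 by (simp add: field_simps)
  qed
  have "Fobj \<I> a nub Astar \<le> ereal phi0"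
  proof (cases "{i. a $ i \<noteq> 0} \<subseteq> Jset \<I> nub")
    case True
    obtain z where "hh \<I> a nub Astar z = phi \<I> a nub Astar" using var(2)[OF As nnb True] by metis
    then show ?thesis using key[of z] True Fobj_char[OF As nnb] by simp
  next
    case False
    obtain x where "hh \<I> a nub Astar x > phi0" using unbounded[OF As nnb False] by blast
    then show ?thesis using key[of x] by simp
  qed
  then have "nub \<in> nu_star \<I> a c B0 Astar"
    using nubK opt F0 unfolding nu_star_def by (auto intro: order_trans)
  then have "nub = \<nu>0" using ns by simp
  then show False using dist \<epsilon> by simp
qed

end
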